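(* Let $S$ be a left cancellative semigroup and let $\omega$ be a weight on $S$. If $\ell^{1}(S,\omega)$ is pseudo-amenable, then $S$ is a group.
   Context: $S$ is left cancellative if $st=su$ implies $t=u$. A weight on $S$ is a function $\omega:S\to(0,\infty)$ with $\omega(st)\le\omega(s)\omega(t)$. The Beurling algebra $\ell^{1}(S,\omega)$ is the space of $f=\sum_s f(s)\delta_s$ with $\sum_s|f(s)|\omega(s)<\infty$, with convolution $\delta_s*\delta_t=\delta_{st}$. For a Banach algebra $\mathcal{A}$, with $\pi:\mathcal{A}\hat{\otimes}\mathcal{A}\to\mathcal{A}$, $\pi(a\otimes b)=ab$, an approximate diagonal is a net $(m_i)$ in $\mathcal{A}\hat{\otimes}\mathcal{A}$ with $a\cdot m_i-m_i\cdot a\to0$ and $a\pi(m_i)\to a$ for all $a\in\mathcal{A}$ (module actions $c\cdot(a\otimes b)=ca\otimes b$, $(a\otimes b)\cdot c=a\otimes bc$); $\mathcal{A}$ is pseudo-amenable if it has an approximate diagonal. *)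

theory Defs
  imports "HOL-Analysis.Analysis"
begin

definition left_cancellative :: "'a::semigroup_mult itself \<Rightarrow> bool" where
  "left_cancellative _ \<longleftrightarrow> (\<forall>s t u::'a. s * t = s * u \<longrightarrow> t = u)"

definition semigroup_is_group :: "'a::semigroup_mult itself \<Rightarrow> bool" where
  "semigroup_is_group _ \<longleftrightarrow>
     (\<exists>e::'a. (\<forall>x. e * x = x \<and> x * e = x) \<and> (\<forall>x. \<exists>y. x * y = e \<and> y * x = e))"

definition weight :: "('a::semigroup_mult \<Rightarrow> real) \<Rightarrow> bool" where
  "weight \<omega> \<longleftrightarrow> (\<forall>s. 0 < \<omega> s) \<and> (\<forall>s t. \<omega> (s * t) \<le> \<omega> s * \<omega> t)"

definition l1w :: "('a \<Rightarrow> real) \<Rightarrow> ('a \<Rightarrow> complex) set" where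
  "l1w \<omega> = {f. (\<lambda>s. norm (f s) * \<omega> s) summable_on UNIV}"

definition l1w_norm :: "('a \<Rightarrow> real) \<Rightarrow> ('a \<Rightarrow> complex) \<Rightarrow> real" where
  "l1w_norm \<omega> f = (\<Sum>\<^sub>\<infinity>s. norm (f s) * \<omega> s)"

definition conv :: "('a::semigroup_mult \<Rightarrow> complex) \<Rightarrow> ('a \<Rightarrow> complex) \<Rightarrow> 'a \<Rightarrow> complex" where
  "conv f g u = (\<Sum>\<^sub>\<infinity>p\<in>{p. fst p * snd p = u}. f (fst p) * g (snd p))"

text \<open>Projective tensor product l1(S,w) \<otimes> l1(S,w), identified isometrically with
  l1(S x S, w x w); delta_s \<otimes> delta_t corresponds to delta_(s,t).\<close>

definition l1w2 :: "('a \<Rightarrow> real) \<Rightarrow> ('a \<times> 'a \<Rightarrow> complex) set" where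
  "l1w2 \<omega> = {M. (\<lambda>p. norm (M p) * (\<omega> (fst p) * \<omega> (snd p))) summable_on UNIV}"

definition l1w2_norm :: "('a \<Rightarrow> real) \<Rightarrow> ('a \<times> 'a \<Rightarrow> complex) \<Rightarrow> real" where
  "l1w2_norm \<omega> M = (\<Sum>\<^sub>\<infinity>p. norm (M p) * (\<omega> (fst p) * \<omega> (snd p)))"

text \<open>Left module action c.(a \<otimes> b) = ca \<otimes> b.\<close>
definition lmod :: "('a::semigroup_mult \<Rightarrow> complex) \<Rightarrow> ('a \<times> 'a \<Rightarrow> complex) \<Rightarrow> 'a \<times> 'a \<Rightarrow> complex" where
  "lmod c M q = (\<Sum>\<^sub>\<infinity>p\<in>{p. fst p * snd p = fst q}. c (fst p) * M (snd p, snd q))"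

text \<open>Right module action (a \<otimes> b).c = a \<otimes> bc.\<close>
definition rmod :: "('a \<times> 'a \<Rightarrow> complex) \<Rightarrow> ('a::semigroup_mult \<Rightarrow> complex) \<Rightarrow> 'a \<times> 'a \<Rightarrow> complex" where
  "rmod M c q = (\<Sum>\<^sub>\<infinity>p\<in>{p. fst p * snd p = snd q}. M (fst q, fst p) * c (snd p))"

text \<open>Multiplication map pi(a \<otimes> b) = ab.\<close>
definition prodmap :: "('a::semigroup_mult \<times> 'a \<Rightarrow> complex) \<Rightarrow> 'a \<Rightarrow> complex" where
  "prodmap M u = (\<Sum>\<^sub>\<infinity>p\<in>{p. fst p * snd p = u}. M p)"

text \<open>A net (m_i) is represented
  by the (proper) filter it generates on the tensor space; convergence of nets in norm
  is then convergence along this filter.\<close>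

definition pseudo_amenable :: "('a::semigroup_mult \<Rightarrow> real) \<Rightarrow> bool" where
  "pseudo_amenable \<omega> \<longleftrightarrow>
    (\<exists>F :: ('a \<times> 'a \<Rightarrow> complex) filter. F \<noteq> bot \<and>
       eventually (\<lambda>m. m \<in> l1w2 \<omega>) F \<and>
       (\<forall>a \<in> l1w \<omega>.
          ((\<lambda>m. l1w2_norm \<omega> (\<lambda>q. lmod a m q - rmod m a q)) \<longlongrightarrow> 0) F \<and>
          ((\<lambda>m. l1w_norm \<omega> (\<lambda>u. conv a (prodmap m) u - a u)) \<longlongrightarrow> 0) F))"

end

theory Submission
  imports Defs
begin

lemma real_cmp_summable:
  fixes f :: "'b \<Rightarrow> 'z::banach" and g :: "'b \<Rightarrow> real"
  assumes "g summable_on A" "\<And>x. x \<in> A \<Longrightarrow> norm (f x) \<le> g x"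
  shows "(\<lambda>x. norm (f x)) summable_on A"
proof -
  have "(\<lambda>x. norm (g x)) summable_on A"
    using assms by (smt (verit, ccfv_SIG) norm_ge_zero real_norm_def summable_on_cong)
  then show ?thesis
    by (rule Infinite_Sum.abs_summable_on_comparison_test) (use assms in force)
qed

lemma nonneg_real_cmp:
  fixes f g :: "'b \<Rightarrow> real"
  assumes "g summable_on A" "\<And>x. x \<in> A \<Longrightarrow> 0 \<le> f x" "\<And>x. x \<in> A \<Longrightarrow> f x \<le> g x"
  shows "f summable_on A"
proof -
  have "(\<lambda>x. norm (f x)) summable_on A"
    by (rule real_cmp_summable[OF assms(1)]) (use assms in auto)
  then show ?thesis by (rule abs_summable_summable)
qed

lemma push_summable:
  fixes F :: "'b \<Rightarrow> 'z::banach" and W :: "'b \<Rightarrow> real" and V :: "'c \<Rightarrow> real"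
    and g :: "'b \<Rightarrow> 'c"
  assumes sum: "(\<lambda>p. norm (F p) * W p) summable_on UNIV"
    and Vpos: "\<And>c. 0 < V c" and C: "0 < C" and le: "\<And>p. V (g p) \<le> C * W p"
  shows "(\<lambda>c. norm (infsum F {p. g p = c}) * V c) summable_on UNIV"
proof -
  define H where "H p = norm (F p) * W p" for p
  have Hnn: "0 \<le> H p" for p
    using Vpos[of "g p"] le[of p] C unfolding H_def
    by (smt (verit) mult_nonneg_nonneg norm_ge_zero zero_less_mult_iff)
  have img: "Sigma UNIV (\<lambda>c. {p. g p = c}) = (\<lambda>p. (g p, p)) ` UNIV"
    by auto
  have inj: "inj_on (\<lambda>p. (g p, p)) UNIV"
    by (auto simp: inj_on_def)
  have "(\<lambda>(c, p). H p) summable_on Sigma UNIV (\<lambda>c. {p. g p = c})"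
    unfolding img summable_on_reindex[OF inj] using sum by (simp add: o_def H_def)
  then have S1: "(\<lambda>c. infsum H {p. g p = c}) summable_on UNIV"
    using summable_on_Sigma_banach[of "\<lambda>c p. H p" UNIV "\<lambda>c. {p. g p = c}"] by simp
  then have S2: "(\<lambda>c. C * infsum H {p. g p = c}) summable_on UNIV"
    by (rule summable_on_cmult_right)
  have Hfib: "H summable_on {p. g p = c}" for c
    using sum summable_on_subset_banach unfolding H_def by blast
  show ?thesis
  proof (rule nonneg_real_cmp[OF S2])
    fix c :: 'c
    show "0 \<le> norm (infsum F {p. g p = c}) * V c"
      using Vpos[of c] by simp
    have b1: "norm (F p) \<le> (C / V c) * H p" if "p \<in> {p. g p = c}" for p
    proof -
      have "norm (F p) * V c \<le> norm (F p) * (C * W p)"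
        using le[of p] that by (simp add: mult_left_mono)
      then have "norm (F p) * V c \<le> C * H p" unfolding H_def by (simp add: algebra_simps)
      then show ?thesis using Vpos[of c] by (simp add: field_simps)
    qed
    have abs: "(\<lambda>x. norm (F x)) summable_on {p. g p = c}"
      by (rule real_cmp_summable[OF summable_on_cmult_right[OF Hfib] b1])
    have "norm (infsum F {p. g p = c}) \<le> infsum (\<lambda>p. norm (F p)) {p. g p = c}"
      by (rule norm_infsum_bound[OF abs])
    also have "\<dots> \<le> infsum (\<lambda>p. (C / V c) * H p) {p. g p = c}"
      by (rule infsum_mono[OF abs summable_on_cmult_right[OF Hfib] b1])
    also have "\<dots> = (C / V c) * infsum H {p. g p = c}"
      by (rule infsum_cmult_right') 
    finally show "norm (infsum F {p. g p = c}) * V c \<le> C * infsum H {p. g p = c}"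
      using Vpos[of c] by (simp add: field_simps)
  qed
qed

definition dl :: "'a \<Rightarrow> 'a \<Rightarrow> complex" where
  "dl s = (\<lambda>x. if x = s then 1 else 0)"

lemma dl_fst_sum:
  fixes G :: "'a::semigroup_mult \<times> 'a \<Rightarrow> complex"
  shows "infsum (\<lambda>p. dl s (fst p) * G p) {p. fst p * snd p = u} = infsum (\<lambda>z. G (s, z)) {z. s * z = u}"
proof -
  have "infsum (\<lambda>p. dl s (fst p) * G p) {p. fst p * snd p = u}
      = infsum G ((\<lambda>z. (s, z)) ` {z. s * z = u})"
  proof (rule infsum_cong_neutral)
    fix x assume xx: "x \<in> (\<lambda>z. (s, z)) ` {z. s * z = u} - {p. fst p * snd p = u}"
    then obtain z where z: "x = (s, z)" "s * z = u" by blast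
    have "x \<notin> {p. fst p * snd p = u}" using xx by blast
    with z show "G x = 0" by simp
  next
    fix x :: "'a \<times> 'a" assume x: "x \<in> {p. fst p * snd p = u} - (\<lambda>z. (s, z)) ` {z. s * z = u}"
    have "fst x \<noteq> s"
    proof
      assume "fst x = s"
      then have "x = (s, snd x)" by (simp add: prod_eq_iff)
      moreover have "s * snd x = u" using x \<open>fst x = s\<close> by simp
      ultimately have "x \<in> (\<lambda>z. (s, z)) ` {z. s * z = u}" by blast
      then show False using x by blast
    qed
    then show "dl s (fst x) * G x = 0" by (simp add: dl_def)
  next
    fix x assume "x \<in> {p. fst p * snd p = u} \<inter> (\<lambda>z. (s, z)) ` {z. s * z = u}"
    then obtain z where "x = (s, z)" by blast
    then have "fst x = s" by simp
    then show "dl s (fst x) * G x = G x" by (simp add: dl_def)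
  qed
  also have "\<dots> = infsum (\<lambda>z. G (s, z)) {z. s * z = u}"
    by (subst infsum_reindex) (auto simp: inj_on_def o_def)
  finally show ?thesis .
qed

lemma dl_snd_sum:
  fixes G :: "'a::semigroup_mult \<times> 'a \<Rightarrow> complex"
  shows "infsum (\<lambda>p. G p * dl s (snd p)) {p. fst p * snd p = u} = infsum (\<lambda>z. G (z, s)) {z. z * s = u}"
proof -
  have "infsum (\<lambda>p. G p * dl s (snd p)) {p. fst p * snd p = u}
      = infsum G ((\<lambda>z. (z, s)) ` {z. z * s = u})"
  proof (rule infsum_cong_neutral)
    fix x assume xx: "x \<in> (\<lambda>z. (z, s)) ` {z. z * s = u} - {p. fst p * snd p = u}"
    then obtain z where z: "x = (z, s)" "z * s = u" by blast
    have "x \<notin> {p. fst p * snd p = u}" using xx by blast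
    with z show "G x = 0" by simp
  next
    fix x :: "'a \<times> 'a" assume x: "x \<in> {p. fst p * snd p = u} - (\<lambda>z. (z, s)) ` {z. z * s = u}"
    have "snd x \<noteq> s"
    proof
      assume "snd x = s"
      then have "x = (fst x, s)" by (simp add: prod_eq_iff)
      moreover have "fst x * s = u" using x \<open>snd x = s\<close> by simp
      ultimately have "x \<in> (\<lambda>z. (z, s)) ` {z. z * s = u}" by blast
      then show False using x by blast
    qed
    then show "G x * dl s (snd x) = 0" by (simp add: dl_def)
  next
    fix x assume "x \<in> {p. fst p * snd p = u} \<inter> (\<lambda>z. (z, s)) ` {z. z * s = u}"
    then obtain z where "x = (z, s)" by blast
    then have "snd x = s" by simp
    then show "G x * dl s (snd x) = G x" by (simp add: dl_def)
  qed
  also have "\<dots> = infsum (\<lambda>z. G (z, s)) {z. z * s = u}"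
    by (subst infsum_reindex) (auto simp: inj_on_def o_def)
  finally show ?thesis .
qed

lemma conv_dl: "conv (dl s) g u = infsum g {v. s * v = u}"
  unfolding conv_def using dl_fst_sum[of s "\<lambda>p. g (snd p)" u] by simp

lemma lmod_dl: "lmod (dl s) M q = infsum M {p. (s * fst p, snd p) = q}"
proof -
  obtain a b where q: "q = (a, b)" by (cases q)
  have "lmod (dl s) M q = infsum (\<lambda>z. M (z, b)) {z. s * z = a}"
    unfolding lmod_def q fst_conv snd_conv using dl_fst_sum[of s "\<lambda>p. M (snd p, b)" a] by simp
  also have "\<dots> = infsum M ((\<lambda>z. (z, b)) ` {z. s * z = a})"
    by (subst infsum_reindex) (auto simp: inj_on_def o_def)
  also have "(\<lambda>z. (z, b)) ` {z. s * z = a} = {p. (s * fst p, snd p) = q}"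
    unfolding q by force
  finally show ?thesis .
qed

lemma rmod_dl: "rmod M (dl s) q = infsum M {p. (fst p, snd p * s) = q}"
proof -
  obtain a b where q: "q = (a, b)" by (cases q)
  have "rmod M (dl s) q = infsum (\<lambda>z. M (a, z)) {z. z * s = b}"
    unfolding rmod_def q fst_conv snd_conv using dl_snd_sum[of "\<lambda>p. M (a, fst p)" s b] by simp
  also have "\<dots> = infsum M ((\<lambda>z. (a, z)) ` {z. z * s = b})"
    by (subst infsum_reindex) (auto simp: inj_on_def o_def)
  also have "(\<lambda>z. (a, z)) ` {z. z * s = b} = {p. (fst p, snd p * s) = q}"
    unfolding q by force
  finally show ?thesis .
qed


lemma diff_summable:
  fixes f g :: "'b \<Rightarrow> complex" and W :: "'b \<Rightarrow> real"
  assumes "(\<lambda>x. norm (f x) * W x) summable_on UNIV" "(\<lambda>x. norm (g x) * W x) summable_on UNIV"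
    and "\<And>x. 0 < W x"
  shows "(\<lambda>x. norm (f x - g x) * W x) summable_on UNIV"
proof (rule nonneg_real_cmp[OF summable_on_add[OF assms(1,2)]])
  fix x :: 'b
  show "0 \<le> norm (f x - g x) * W x" using assms(3)[of x] by simp
  have "norm (f x - g x) \<le> norm (f x) + norm (g x)" by (rule norm_triangle_ineq4)
  then show "norm (f x - g x) * W x \<le> norm (f x) * W x + norm (g x) * W x"
    using assms(3)[of x] by (metis distrib_right less_eq_real_def mult_right_mono)
qed

lemma dl_summable:
  assumes "\<And>x. 0 < \<omega> x"
  shows "(\<lambda>u. norm (dl s u) * \<omega> u) summable_on UNIV"
proof -
  have "(\<lambda>u. norm (dl s u) * \<omega> u) summable_on {s}" by simp
  then show ?thesis
    by (subst summable_on_cong_neutral[where T="{s}"]) (auto simp: dl_def)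
qed

lemma coeff_le:
  fixes h :: "'b \<Rightarrow> complex"
  assumes "(\<lambda>x. norm (h x) * W x) summable_on UNIV" "\<And>x. 0 < W x"
  shows "norm (h u) * W u \<le> (\<Sum>\<^sub>\<infinity>x. norm (h x) * W x)"
proof -
  have "sum (\<lambda>x. norm (h x) * W x) {u} \<le> (\<Sum>\<^sub>\<infinity>x. norm (h x) * W x)"
    by (rule finite_sum_le_infsum[OF assms(1)]) (auto simp: less_imp_le[OF assms(2)])
  then show ?thesis by simp
qed

theorem theorem2p10:
  fixes \<omega> :: "'a::semigroup_mult \<Rightarrow> real"
  assumes "left_cancellative TYPE('a)"
    and "weight \<omega>"
    and "pseudo_amenable \<omega>"
  shows "semigroup_is_group TYPE('a)"
proof -
  have LC: "\<And>s t u::'a. s * t = s * u \<Longrightarrow> t = u"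
    using assms(1) unfolding left_cancellative_def by blast
  have wpos: "\<And>s. 0 < \<omega> s" and wmul: "\<And>s t. \<omega> (s * t) \<le> \<omega> s * \<omega> t"
    using assms(2) unfolding weight_def by auto
  obtain F :: "('a \<times> 'a \<Rightarrow> complex) filter" where F: "F \<noteq> bot"
    and Fev: "eventually (\<lambda>m. m \<in> l1w2 \<omega>) F"
    and H: "\<And>a. a \<in> l1w \<omega> \<Longrightarrow>
          ((\<lambda>m. l1w2_norm \<omega> (\<lambda>q. lmod a m q - rmod m a q)) \<longlongrightarrow> 0) F \<and>
          ((\<lambda>m. l1w_norm \<omega> (\<lambda>u. conv a (prodmap m) u - a u)) \<longlongrightarrow> 0) F"
    using assms(3) unfolding pseudo_amenable_def by blast
  have dl_in: "dl s \<in> l1w \<omega>" for s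
    unfolding l1w_def using dl_summable[OF wpos] by simp
  have prod_sum: "(\<lambda>u. norm (prodmap m u) * \<omega> u) summable_on UNIV" if "m \<in> l1w2 \<omega>" for m
  proof -
    have "(\<lambda>u. norm (infsum m {p. fst p * snd p = u}) * \<omega> u) summable_on UNIV"
      by (rule push_summable[where W="\<lambda>p. \<omega> (fst p) * \<omega> (snd p)" and C=1])
        (use that wpos wmul in \<open>auto simp: l1w2_def\<close>)
    then show ?thesis unfolding prodmap_def by simp
  qed
  have conv_sum: "(\<lambda>u. norm (conv (dl s) g u) * \<omega> u) summable_on UNIV"
    if "(\<lambda>u. norm (g u) * \<omega> u) summable_on UNIV" for g s
  proof -
    have "(\<lambda>u. norm (infsum g {v. s * v = u}) * \<omega> u) summable_on UNIV"
      by (rule push_summable[where W="\<omega>" and C="\<omega> s"])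
        (use that wpos wmul in \<open>auto simp: mult.commute[of _ "\<omega> s"]\<close>)
    then show ?thesis unfolding conv_dl by simp
  qed
  have lmod_sum: "(\<lambda>q. norm (lmod (dl s) m q) * (\<omega> (fst q) * \<omega> (snd q))) summable_on UNIV"
    if "m \<in> l1w2 \<omega>" for m s
  proof -
    have "(\<lambda>q. norm (infsum m {p. (s * fst p, snd p) = q}) * (\<omega> (fst q) * \<omega> (snd q))) summable_on UNIV"
    proof (rule push_summable[where W="\<lambda>p. \<omega> (fst p) * \<omega> (snd p)" and C="\<omega> s"])
      show "(\<lambda>p. cmod (m p) * (\<omega> (fst p) * \<omega> (snd p))) summable_on UNIV"
        using that by (simp add: l1w2_def)
      show "0 < \<omega> (fst c) * \<omega> (snd c)" for c using wpos by simp
      show "0 < \<omega> s" by (rule wpos)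
      fix p :: "'a \<times> 'a"
      have "\<omega> (s * fst p) * \<omega> (snd p) \<le> (\<omega> s * \<omega> (fst p)) * \<omega> (snd p)"
        using wmul wpos by (simp add: mult_right_mono less_imp_le)
      then show "\<omega> (fst (s * fst p, snd p)) * \<omega> (snd (s * fst p, snd p)) \<le> \<omega> s * (\<omega> (fst p) * \<omega> (snd p))"
        by (simp add: mult.assoc)
    qed
    then show ?thesis unfolding lmod_dl by simp
  qed
  have rmod_sum: "(\<lambda>q. norm (rmod m (dl s) q) * (\<omega> (fst q) * \<omega> (snd q))) summable_on UNIV"
    if "m \<in> l1w2 \<omega>" for m s
  proof -
    have "(\<lambda>q. norm (infsum m {p. (fst p, snd p * s) = q}) * (\<omega> (fst q) * \<omega> (snd q))) summable_on UNIV"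
    proof (rule push_summable[where W="\<lambda>p. \<omega> (fst p) * \<omega> (snd p)" and C="\<omega> s"])
      show "(\<lambda>p. cmod (m p) * (\<omega> (fst p) * \<omega> (snd p))) summable_on UNIV"
        using that by (simp add: l1w2_def)
      show "0 < \<omega> (fst c) * \<omega> (snd c)" for c using wpos by simp
      show "0 < \<omega> s" by (rule wpos)
      fix p :: "'a \<times> 'a"
      have "\<omega> (fst p) * \<omega> (snd p * s) \<le> \<omega> (fst p) * (\<omega> (snd p) * \<omega> s)"
        using wmul wpos by (simp add: mult_left_mono less_imp_le)
      then show "\<omega> (fst (fst p, snd p * s)) * \<omega> (snd (fst p, snd p * s)) \<le> \<omega> s * (\<omega> (fst p) * \<omega> (snd p))"
        by (simp add: algebra_simps)
    qed
    then show ?thesis unfolding rmod_dl by simp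
  qed
  have conv_eval: "conv (dl s) g (s * v) = g v" for s v :: 'a and g
  proof -
    have "{w. s * w = s * v} = {v}" using LC[of s _ v] by blast
    then show ?thesis unfolding conv_dl by simp
  qed
  have conv_lim: "((\<lambda>m. conv (dl s) (prodmap m) u - dl s u) \<longlongrightarrow> 0) F" for s u
  proof (rule Lim_null_comparison)
    show "((\<lambda>m. l1w_norm \<omega> (\<lambda>u. conv (dl s) (prodmap m) u - dl s u) / \<omega> u) \<longlongrightarrow> 0) F"
      using tendsto_divide_zero[OF conjunct2[OF H[OF dl_in]]] by simp
    show "\<forall>\<^sub>F m in F. norm (conv (dl s) (prodmap m) u - dl s u)
            \<le> l1w_norm \<omega> (\<lambda>u. conv (dl s) (prodmap m) u - dl s u) / \<omega> u"
      using Fev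
    proof eventually_elim
      case (elim m)
      have "(\<lambda>u. norm (conv (dl s) (prodmap m) u - dl s u) * \<omega> u) summable_on UNIV"
        by (rule diff_summable[OF conv_sum[OF prod_sum[OF elim]] dl_summable[OF wpos] wpos])
      from coeff_le[OF this wpos, of u] show ?case
        unfolding l1w_norm_def using wpos[of u] by (simp add: field_simps)
    qed
  qed
  define s0 :: 'a where "s0 = undefined"
  have "\<exists>e. s0 * e = s0"
  proof (rule ccontr)
    assume nex: "\<not> (\<exists>e. s0 * e = s0)"
    have "{v. s0 * v = s0} = {}" using nex by auto
    then have "\<And>m. conv (dl s0) (prodmap m) s0 - dl s0 s0 = -1"
      unfolding conv_dl by (simp add: dl_def)
    with conv_lim[of s0 s0] have "((\<lambda>m. -1::complex) \<longlongrightarrow> 0) F" by simp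
    then have "(-1::complex) = 0" using tendsto_unique[OF F] tendsto_const by blast
    then show False by simp
  qed
  then obtain e where e0: "s0 * e = s0" by blast
  have eleft: "e * x = x" for x
  proof -
    have "s0 * (e * x) = (s0 * e) * x" by (simp add: mult.assoc)
    also have "\<dots> = s0 * x" using e0 by simp
    finally have "s0 * (e * x) = s0 * x" .
    then show ?thesis by (rule LC)
  qed
  have P1: "((\<lambda>m. prodmap m e) \<longlongrightarrow> 1) F"
  proof -
    have "\<And>m. conv (dl e) (prodmap m) e - dl e e = prodmap m e - 1"
      using conv_eval[where s=e and v=e] eleft[of e] by (simp add: dl_def)
    with conv_lim[of e e] have "((\<lambda>m. prodmap m e - 1) \<longlongrightarrow> 0) F" by simp
    then have "((\<lambda>m. prodmap m e - 1 + 1) \<longlongrightarrow> 0 + 1) F" by (rule tendsto_add[OF _ tendsto_const])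
    then show ?thesis by simp
  qed
  have eright: "s * e = s" for s
  proof (rule ccontr)
    assume ne: "s * e \<noteq> s"
    have "\<And>m. conv (dl s) (prodmap m) (s * e) - dl s (s * e) = prodmap m e"
      using conv_eval ne by (simp add: dl_def)
    with conv_lim[of s "s * e"] have "((\<lambda>m. prodmap m e) \<longlongrightarrow> 0) F" by simp
    with P1 have "(1::complex) = 0" using tendsto_unique[OF F] by blast
    then show False by simp
  qed
  have rinv: "\<exists>t. s * t = e" for s
  proof (rule ccontr)
    assume nt: "\<not> (\<exists>t. s * t = e)"
    have nls: "z * (w * s) \<noteq> e" for z w
    proof
      assume zw: "z * (w * s) = e"
      define f where "f = s * (z * w)"
      have "f * f = s * ((z * (w * s)) * (z * w))" unfolding f_def by (simp add: mult.assoc)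
      also have "\<dots> = f" unfolding zw eleft f_def ..
      finally have "f * f = f * e" using eright by simp
      then have "f = e" by (rule LC)
      then show False using nt unfolding f_def by blast
    qed
    define Wt where "Wt q = \<omega> (fst q) * \<omega> (snd q)" for q :: "'a \<times> 'a"
    have Wtpos: "0 < Wt q" for q unfolding Wt_def using wpos by simp
    define A where "A = {p :: 'a \<times> 'a. (\<forall>w. snd p \<noteq> w * s) \<and> fst p * snd p = s}"
    define E where "E = {p :: 'a \<times> 'a. fst p * snd p = e}"
    define \<phi> where "\<phi> p = (s * fst p, snd p)" for p :: "'a \<times> 'a"
    have bound: "norm (prodmap m e) \<le> l1w2_norm \<omega> (\<lambda>q. lmod (dl s) m q - rmod m (dl s) q) / \<omega> s"
      if mI: "m \<in> l1w2 \<omega>" for m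
    proof -
      define D where "D q = lmod (dl s) m q - rmod m (dl s) q" for q
      have sumD: "(\<lambda>q. norm (D q) * Wt q) summable_on UNIV"
        unfolding D_def Wt_def by (rule diff_summable[OF lmod_sum[OF mI] rmod_sum[OF mI]]) (use wpos in simp)
      have rm0: "rmod m (dl s) q = 0" if "q \<in> A" for q
      proof -
        have "{p. (fst p, snd p * s) = q} = {}"
        proof (rule ccontr)
          assume "{p. (fst p, snd p * s) = q} \<noteq> {}"
          then obtain p where "(fst p, snd p * s) = q" by blast
          then have "snd q = snd p * s" by auto
          with that show False unfolding A_def by blast
        qed
        then show ?thesis unfolding rmod_dl by simp
      qed
      have lm_phi: "lmod (dl s) m (\<phi> p) = m p" for p
      proof -
        have phi_eq: "p' = p" if "\<phi> p' = \<phi> p" for p'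
        proof -
          have "s * fst p' = s * fst p" "snd p' = snd p" using that unfolding \<phi>_def by simp_all
          then show ?thesis using LC[of s "fst p'" "fst p"] by (simp add: prod_eq_iff)
        qed
        have "{p'. (s * fst p', snd p') = \<phi> p} = {p}"
        proof (intro set_eqI iffI)
          fix p' assume "p' \<in> {p'. (s * fst p', snd p') = \<phi> p}"
          then have "\<phi> p' = \<phi> p" unfolding \<phi>_def by simp
          then show "p' \<in> {p}" using phi_eq by simp
        next
          fix p' assume "p' \<in> {p}"
          then show "p' \<in> {p'. (s * fst p', snd p') = \<phi> p}" unfolding \<phi>_def by simp
        qed
        then show ?thesis unfolding lmod_dl by simp
      qed
      have lm0: "lmod (dl s) m q = 0" if "q \<in> A - \<phi> ` E" for q
      proof -
        have "{p. (s * fst p, snd p) = q} = {}"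
        proof (rule ccontr)
          assume "{p. (s * fst p, snd p) = q} \<noteq> {}"
          then obtain p where p: "(s * fst p, snd p) = q" by blast
          have q1: "fst q * snd q = s" using that unfolding A_def by simp
          have "s * (fst p * snd p) = (s * fst p) * snd p" by (simp add: mult.assoc)
          also have "\<dots> = fst q * snd q" using p by (simp add: prod_eq_iff)
          also have "\<dots> = s * e" using q1 eright[of s] by simp
          finally have "s * (fst p * snd p) = s * e" .
          then have "fst p * snd p = e" by (rule LC)
          then have pE: "p \<in> E" unfolding E_def by simp
          have "q = \<phi> p" using p unfolding \<phi>_def by simp
          with pE have "q \<in> \<phi> ` E" by (rule_tac image_eqI)
          then show False using that by blast
        qed
        then show ?thesis unfolding lmod_dl by simp
      qed
      have phiA: "\<phi> ` E \<subseteq> A"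
      proof
        fix q assume "q \<in> \<phi> ` E"
        then obtain p where p: "p \<in> E" "q = \<phi> p" by blast
        show "q \<in> A" unfolding A_def
        proof (intro CollectI conjI allI)
          fix w show "snd q \<noteq> w * s" using nls[of "fst p" w] p unfolding E_def \<phi>_def by auto
        next
          show "fst q * snd q = s" using p eright unfolding E_def \<phi>_def by (simp add: mult.assoc)
        qed
      qed
      have injphi: "inj_on \<phi> E"
      proof (rule inj_onI)
        fix p p' assume "\<phi> p = \<phi> p'"
        then have "s * fst p = s * fst p'" "snd p = snd p'" unfolding \<phi>_def by simp_all
        then show "p = p'" using LC[of s "fst p" "fst p'"] by (simp add: prod_eq_iff)
      qed
      have "prodmap m e = infsum m E" unfolding prodmap_def E_def ..
      also have "\<dots> = infsum (lmod (dl s) m \<circ> \<phi>) E" by (simp add: o_def lm_phi)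
      also have "\<dots> = infsum (lmod (dl s) m) (\<phi> ` E)" by (rule infsum_reindex[OF injphi, symmetric])
      also have "\<dots> = infsum (lmod (dl s) m) A"
        by (rule infsum_cong_neutral) (use phiA lm0 in auto)
      also have "\<dots> = infsum D A"
        by (rule infsum_cong) (simp add: D_def rm0)
      finally have pe: "prodmap m e = infsum D A" .
      define G where "G q = norm (D q) * Wt q * (1 / \<omega> s)" for q
      have sumG: "G summable_on UNIV" unfolding G_def by (rule summable_on_cmult_left[OF sumD])
      have sumGA: "G summable_on A" by (rule summable_on_subset_banach[OF sumG]) simp
      have leA: "norm (D q) \<le> G q" if "q \<in> A" for q
      proof -
        have "fst q * snd q = s" using that unfolding A_def by simp
        then have "\<omega> s \<le> Wt q" unfolding Wt_def using wmul[of "fst q" "snd q"] by simp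
        then have "norm (D q) * \<omega> s \<le> norm (D q) * Wt q" by (simp add: mult_left_mono)
        then show ?thesis unfolding G_def using wpos[of s] by (simp add: field_simps)
      qed
      have absA: "(\<lambda>q. norm (D q)) summable_on A"
        using real_cmp_summable[OF sumGA leA] by simp
      have "norm (infsum D A) \<le> infsum (\<lambda>q. norm (D q)) A"
        by (rule norm_infsum_bound[OF absA])
      also have "\<dots> \<le> infsum G A" by (rule infsum_mono[OF absA sumGA leA])
      also have "\<dots> \<le> infsum G UNIV"
        by (rule infsum_mono_neutral[OF sumGA sumG]) (use Wtpos wpos in \<open>auto simp: G_def less_imp_le\<close>)
      also have "\<dots> = infsum (\<lambda>q. norm (D q) * Wt q) UNIV * (1 / \<omega> s)"
        unfolding G_def by (rule infsum_cmult_left')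
      also have "\<dots> = l1w2_norm \<omega> D / \<omega> s"
        unfolding l1w2_norm_def Wt_def by simp
      finally show ?thesis using pe unfolding D_def by simp
    qed
    have "((\<lambda>m. prodmap m e) \<longlongrightarrow> 0) F"
    proof (rule Lim_null_comparison)
      show "((\<lambda>m. l1w2_norm \<omega> (\<lambda>q. lmod (dl s) m q - rmod m (dl s) q) / \<omega> s) \<longlongrightarrow> 0) F"
        using tendsto_divide_zero[OF conjunct1[OF H[OF dl_in]]] by simp
      show "\<forall>\<^sub>F m in F. norm (prodmap m e) \<le> l1w2_norm \<omega> (\<lambda>q. lmod (dl s) m q - rmod m (dl s) q) / \<omega> s"
        using Fev by eventually_elim (rule bound)
    qed
    with P1 have "(1::complex) = 0" using tendsto_unique[OF F] by blast
    then show False by simp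
  qed
  show ?thesis
    unfolding semigroup_is_group_def
  proof (rule exI[of _ e], intro conjI allI)
    fix x
    show "e * x = x" by (rule eleft)
  next
    fix x
    show "x * e = x" by (rule eright)
  next
    fix x
    obtain t where t: "x * t = e" using rinv by blast
    have "x * (t * x) = (x * t) * x" by (simp add: mult.assoc)
    also have "\<dots> = x * e" using t eleft[of x] eright[of x] by simp
    finally have "x * (t * x) = x * e" .
    then have "t * x = e" by (rule LC)
    with t show "\<exists>y. x * y = e \<and> y * x = e" by blast
  qed
qed

end
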